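(* Let $S$ be a random $*$-tree on a $*$-tree $B\subseteq\mathbb{A}^*$ with bounded offspring distributions $\{M_x\}_{x\in B}$. Let $\mathscr{A}$ assign to each $x\in B'$ a nonempty monotonic collection $\mathscr{A}_x$ of subsets of $W_{B'}(x)$. Define $g_{\mathscr{A}}:[0,1]\to[0,1]$ by $g_{\mathscr{A}}(s)=\sup_{x\in B'}\mathbb{P}(M_x^{(s)}\notin\mathscr{A}_x)$, and let $s_0$ be the smallest fixed point of $g_{\mathscr{A}}$ in $[0,1]$. Then $\sup_{x\in B'}\mathbb{P}\big(S^x\text{ has no }\mathscr{A}^x\text{-}*\text{-subtree}\ \big|\ x\in S\big)\le s_0.$
   Context: $\mathbb{A}$ is a finite alphabet, $\mathbb{A}^*$ the finite words (with empty word $\emptyset$); $j<i$ means $j$ is a proper prefix of $i$. For $S\subseteq\mathbb{A}^*$ and $i\in S$, the height is $h_S(i)=|\{j\in S:j<i\}|$. A $*$-tree is $S\subseteq\mathbb{A}^*$ with $\emptyset\in S$, such that every $\emptyset\ne i\in S$ has a unique $j\in S$ with $j<i$ and $h_S(j)=h_S(i)-1$, and each $S_n=h_S^{-1}(n)$ is finite. For $i\in S$: $W_S(i)=\{j\in\mathbb{A}^*: ij\in S_{h_S(i)+1}\}$ and $S^i=\{j:ij\in S\}$. A $*$-subtree of $S$ is a $*$-tree $Q\subseteq S$ such that for every $i\in Q$, $\{j\in S:j<i\}\subseteq Q$. Random $*$-tree on a $*$-tree $B$: given independent random variables $M_x$ ($x\in B$) with $M_x\subseteq W_B(x)$, set $S_0=\{\emptyset\}$,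 $S_n=\bigcup_{i\in S_{n-1}}\{ij:j\in M_i\}$, $S=\bigcup_nS_n$. $B'=\{i\in B:\mathbb{P}(i\in S)>0\}$. The offspring distributions are bounded if there is $C>0$ with $\mathbb{P}(|M_x|<C)=1$ for all $x\in B'$. For a map $x\mapsto\mathscr{A}_x$, a $*$-tree $Q$ is an $\mathscr{A}$-$*$-tree if $W_Q(i)\in\mathscr{A}_i$ for all $i\in Q$; $\mathscr{A}^x$ is the map $i\mapsto\mathscr{A}_{xi}$. $\mathscr{A}_x$ is monotonic if $X\in\mathscr{A}_x$ and $X\subseteq Y\subseteq W_{B'}(x)$ imply $Y\in\mathscr{A}_x$. $M_x^{(s)}=M_x\cap Y$ with $Y$ independent of $M_x$, $\mathbb{P}(Y=D)=(1-s)^{|D|}s^{|W_B(x)\setminus D|}$ for $D\subseteq W_B(x)$. *)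

theory Defs
  imports "HOL-Probability.Probability" "HOL-Library.Sublist"
begin

text \<open>Words over a finite alphabet are lists; j < i (proper prefix) is strict_prefix j i.\<close>

definition height :: "'a list set \<Rightarrow> 'a list \<Rightarrow> nat" where
  "height S i = card {j \<in> S. strict_prefix j i}"

definition level :: "'a list set \<Rightarrow> nat \<Rightarrow> 'a list set" where
  "level S n = {i \<in> S. height S i = n}"

definition star_tree :: "'a list set \<Rightarrow> bool" where
  "star_tree S \<longleftrightarrow> [] \<in> S \<and>
     (\<forall>i\<in>S. i \<noteq> [] \<longrightarrow> (\<exists>!j. j \<in> S \<and> strict_prefix j i \<and> height S j = height S i - 1)) \<and>
     (\<forall>n. finite (level S n))"

definition W :: "'a list set \<Rightarrow> 'a list \<Rightarrow> 'a list set" where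
  "W S i = {j. i @ j \<in> level S (height S i + 1)}"

definition subtree_at :: "'a list set \<Rightarrow> 'a list \<Rightarrow> 'a list set" where
  "subtree_at S i = {j. i @ j \<in> S}"

definition star_subtree :: "'a list set \<Rightarrow> 'a list set \<Rightarrow> bool" where
  "star_subtree Q S \<longleftrightarrow> star_tree Q \<and> Q \<subseteq> S \<and>
     (\<forall>i\<in>Q. \<forall>j\<in>S. strict_prefix j i \<longrightarrow> j \<in> Q)"

definition A_star_tree :: "('a list \<Rightarrow> 'a list set set) \<Rightarrow> 'a list set \<Rightarrow> bool" where
  "A_star_tree A Q \<longleftrightarrow> star_tree Q \<and> (\<forall>i\<in>Q. W Q i \<in> A i)"

fun rlevel :: "('a list \<Rightarrow> 'a list set) \<Rightarrow> nat \<Rightarrow> 'a list set" where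
  "rlevel m 0 = {[]}"
| "rlevel m (Suc n) = (\<Union>i\<in>rlevel m n. (\<lambda>j. i @ j) ` m i)"

definition rtree :: "('a list \<Rightarrow> 'a list set) \<Rightarrow> 'a list set" where
  "rtree m = (\<Union>n. rlevel m n)"

text \<open>P(M_x^(s) \<notin> A_x) where M_x^(s) = M_x \<inter> Y, Y independent of M_x with
  P(Y = D) = (1-s)^|D| s^|Wx - D| for D \<subseteq> Wx = W_B(x).\<close>
definition thin_prob :: "'w measure \<Rightarrow> ('b \<Rightarrow> 'w \<Rightarrow> 'c set) \<Rightarrow> 'c set \<Rightarrow> 'c set set \<Rightarrow> 'b \<Rightarrow> real \<Rightarrow> real" where
  "thin_prob M Mx Wx Ax x s =
     (\<Sum>D\<in>Pow Wx. (1 - s) ^ card D * s ^ card (Wx - D) *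
        measure M {\<omega> \<in> space M. Mx x \<omega> \<inter> D \<notin> Ax})"

end

theory Submission
  imports Defs
begin

lemma finite_strict_prefixes: "finite {j. strict_prefix j (z::'a list)}"
  by (rule finite_subset[of _ "set (prefixes z)"]) auto

lemma height_mono:
  assumes "q \<in> S" "strict_prefix q q'"
  shows "height S q < height S q'"
proof -
  have "{j \<in> S. strict_prefix j q} \<subset> {j \<in> S. strict_prefix j q'}"
    using assms by (auto intro: prefix_order.less_trans)
  moreover have "finite {j \<in> S. strict_prefix j q'}"
    using finite_strict_prefixes[of q'] by (rule finite_subset[rotated]) auto
  ultimately show ?thesis unfolding height_def by (rule psubset_card_mono[rotated])
qed

lemma height_unique:
  assumes "q \<in> S" "q' \<in> S" "prefix q z" "prefix q' z" "height S q = height S q'"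
  shows "q = q'"
proof (rule ccontr)
  assume "q \<noteq> q'"
  from prefix_same_cases[OF assms(3,4)] have "strict_prefix q q' \<or> strict_prefix q' q"
    using \<open>q \<noteq> q'\<close> by (auto simp: strict_prefix_def)
  then show False using height_mono[of q S q'] height_mono[of q' S q] assms by auto
qed

lemma height_Nil: "height S [] = 0"
  unfolding height_def by simp

lemma W_nonempty: "j \<in> W B y \<Longrightarrow> j \<noteq> []"
  unfolding W_def level_def by auto

lemma W_in: "j \<in> W B y \<Longrightarrow> y @ j \<in> B \<and> height B (y @ j) = Suc (height B y)"
  unfolding W_def level_def by auto

lemma finite_W:
  assumes "star_tree B" shows "finite (W B y)"
proof -
  have "finite (level B (height B y + 1))" using assms unfolding star_tree_def by auto
  then have "finite ((\<lambda>j. y @ j) -` level B (height B y + 1))"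
    by (rule finite_vimageI) (auto simp: inj_on_def)
  then show ?thesis unfolding W_def by (simp add: vimage_def)
qed

section \<open>Generated trees\<close>

locale gentree =
  fixes B :: "'a list set" and x :: "'a list" and m :: "'a list \<Rightarrow> 'a list set"
  assumes xB: "x \<in> B"
    and hm: "\<And>i. x @ i \<in> B \<Longrightarrow> m i \<subseteq> W B (x @ i)"
begin

lemma T1: "i \<in> rlevel m n \<Longrightarrow> x @ i \<in> B \<and> height B (x @ i) = height B x + n"
proof (induction n arbitrary: i)
  case 0 then show ?case using xB by simp
next
  case (Suc n)
  then obtain p j where p: "p \<in> rlevel m n" "j \<in> m p" "i = p @ j" by auto
  from Suc.IH[OF p(1)] have "x @ p \<in> B" "height B (x @ p) = height B x + n" by auto
  with hm p(2) have "j \<in> W B (x @ p)" by auto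
  from W_in[OF this] show ?case using p(3) \<open>height B (x @ p) = _\<close> by simp
qed

lemma T2: "i \<in> rlevel m n \<Longrightarrow> k \<le> n \<Longrightarrow> \<exists>c\<in>rlevel m k. prefix c i"
proof (induction n arbitrary: i)
  case 0 then show ?case by auto
next
  case (Suc n)
  show ?case
  proof (cases "k = Suc n")
    case True then show ?thesis using Suc by auto
  next
    case False
    from Suc.prems obtain p j where p: "p \<in> rlevel m n" "j \<in> m p" "i = p @ j" by auto
    from Suc.IH[OF p(1)] False Suc.prems(2) obtain c where "c \<in> rlevel m k" "prefix c p" by auto
    then show ?thesis using p(3) by (intro bexI[of _ c]) (auto simp: prefix_def)
  qed
qed

lemma T3: "i \<in> rlevel m n \<Longrightarrow> i \<in> rlevel m n' \<Longrightarrow> n = n'"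
  using T1[of i n] T1[of i n'] by simp

lemma in_rtree: "i \<in> rtree m \<longleftrightarrow> (\<exists>n. i \<in> rlevel m n)"
  unfolding rtree_def by auto

lemma T4:
  assumes i: "i \<in> rlevel m n"
  shows "height (rtree m) i = n"
proof -
  define lv where "lv p = height B (x @ p) - height B x" for p
  let ?P = "{p \<in> rtree m. strict_prefix p i}"
  have lvk: "p \<in> rlevel m k \<Longrightarrow> lv p = k" for p k using T1[of p k] by (simp add: lv_def)
  have "inj_on lv ?P"
  proof
    fix p p' assume "p \<in> ?P" "p' \<in> ?P" "lv p = lv p'"
    then obtain k k' where "p \<in> rlevel m k" "p' \<in> rlevel m k'" by (auto simp: in_rtree)
    moreover have "k = k'" using calculation lvk \<open>lv p = lv p'\<close> by metis
    ultimately have "x @ p \<in> B" "x @ p' \<in> B" "height B (x @ p) = height B (x @ p')"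
      using T1 by auto
    moreover have "prefix (x @ p) (x @ i)" "prefix (x @ p') (x @ i)"
      using \<open>p \<in> ?P\<close> \<open>p' \<in> ?P\<close> by (auto simp: strict_prefix_def)
    ultimately show "p = p'" using height_unique by blast
  qed
  moreover have "lv ` ?P = {..<n}"
  proof
    show "lv ` ?P \<subseteq> {..<n}"
    proof
      fix k assume "k \<in> lv ` ?P"
      then obtain p where p: "p \<in> ?P" "k = lv p" by auto
      then obtain k' where "p \<in> rlevel m k'" by (auto simp: in_rtree)
      then have "k = k'" "x @ p \<in> B" "height B (x @ p) = height B x + k'"
        using lvk T1 p by auto
      moreover have "height B (x @ p) < height B (x @ i)"
        using p by (intro height_mono[OF \<open>x @ p \<in> B\<close>]) (auto simp: strict_prefix_def)
      ultimately show "k \<in> {..<n}" using T1[OF i] by simp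
    qed
  next
    show "{..<n} \<subseteq> lv ` ?P"
    proof
      fix k assume "k \<in> {..<n}"
      with T2[OF i, of k] obtain c where c: "c \<in> rlevel m k" "prefix c i" by auto
      have "c \<noteq> i" using T3[OF c(1)] i \<open>k \<in> {..<n}\<close> by auto
      then have "c \<in> ?P" using c by (auto simp: in_rtree strict_prefix_def)
      then show "k \<in> lv ` ?P" using lvk[OF c(1)] by force
    qed
  qed
  ultimately have "card ?P = card {..<n}" by (metis card_image)
  then show ?thesis unfolding height_def by simp
qed

lemma T5: "level (rtree m) n = rlevel m n"
  unfolding level_def using T4 by (auto simp: in_rtree)

lemma T6: assumes "star_tree B" shows "star_tree (rtree m)"
  unfolding star_tree_def
proof (intro conjI ballI allI impI)
  show "[] \<in> rtree m" by (auto simp: in_rtree intro: exI[of _ 0])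
next
  fix n
  have "finite (level B (height B x + n))" using assms unfolding star_tree_def by auto
  then have "finite ((\<lambda>j. x @ j) -` level B (height B x + n))"
    by (rule finite_vimageI) (auto simp: inj_on_def)
  moreover have "rlevel m n \<subseteq> (\<lambda>j. x @ j) -` level B (height B x + n)"
    using T1 by (auto simp: level_def)
  ultimately show "finite (level (rtree m) n)" unfolding T5 by (rule finite_subset[rotated])
next
  fix i assume "i \<in> rtree m" "i \<noteq> []"
  then obtain n where i: "i \<in> rlevel m n" by (auto simp: in_rtree)
  with \<open>i \<noteq> []\<close> obtain k where k: "n = Suc k" by (cases n) auto
  with i obtain p j where p: "p \<in> rlevel m k" "j \<in> m p" "i = p @ j" by auto
  have "j \<noteq> []"
  proof
    assume "j = []"
    with p(3) have "i = p" by simp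
    with i k have "p \<in> rlevel m (Suc k)" by simp
    from T3[OF p(1) this] show False by simp
  qed
  have hp: "height (rtree m) p = k" using T4[OF p(1)] .
  have hi: "height (rtree m) i = n" using T4[OF i] .
  show "\<exists>!j. j \<in> rtree m \<and> strict_prefix j i \<and> height (rtree m) j = height (rtree m) i - 1"
  proof (rule ex1I[of _ p])
    show "p \<in> rtree m \<and> strict_prefix p i \<and> height (rtree m) p = height (rtree m) i - 1"
      using p \<open>j \<noteq> []\<close> hp hi k by (auto simp: in_rtree strict_prefix_def)
  next
    fix p' assume "p' \<in> rtree m \<and> strict_prefix p' i \<and> height (rtree m) p' = height (rtree m) i - 1"
    then obtain k' where p': "p' \<in> rlevel m k'" "strict_prefix p' i" "height (rtree m) p' = k"
      using hi k by (auto simp: in_rtree)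
    have "k' = k" using T4[OF p'(1)] p'(3) by simp
    then have "x @ p' \<in> B" "x @ p \<in> B" "height B (x @ p') = height B (x @ p)"
      using T1 p'(1) p(1) by auto
    moreover have "prefix (x @ p') (x @ i)" "prefix (x @ p) (x @ i)"
      using p'(2) p(3) by (auto simp: strict_prefix_def)
    ultimately show "p' = p" using height_unique by blast
  qed
qed

lemma T7:
  assumes i: "i \<in> rlevel m n"
  shows "W (rtree m) i = m i"
proof
  show "m i \<subseteq> W (rtree m) i"
    using i T4[OF i] by (auto simp: W_def T5)
next
  show "W (rtree m) i \<subseteq> m i"
  proof
    fix j assume "j \<in> W (rtree m) i"
    then have "i @ j \<in> rlevel m (Suc n)" using T4[OF i] by (simp add: W_def T5)
    then obtain p j' where p: "p \<in> rlevel m n" "j' \<in> m p" "i @ j = p @ j'" by auto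
    have "x @ p \<in> B" "x @ i \<in> B" "height B (x @ p) = height B (x @ i)"
      using T1 p(1) i by auto
    moreover have "prefix (x @ p) (x @ i @ j)" "prefix (x @ i) (x @ i @ j)"
      using p(3) by (auto simp: prefix_def) (metis append.assoc)
    ultimately have "x @ p = x @ i" using height_unique by blast
    then show "j \<in> m i" using p by auto
  qed
qed

end

definition pw :: "'b set \<Rightarrow> ('b \<Rightarrow> real) \<Rightarrow> 'b set \<Rightarrow> real" where
  "pw U q D = (\<Prod>j\<in>U. if j \<in> D then q j else 1 - q j)"

lemma pw_insert1:
  assumes "finite U" "a \<notin> U" "D \<subseteq> U"
  shows "pw (insert a U) q D = (1 - q a) * pw U q D"
  using assms unfolding pw_def by (subst prod.insert) auto

lemma pw_insert2:
  assumes "finite U" "a \<notin> U" "D \<subseteq> U"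
  shows "pw (insert a U) q (insert a D) = q a * pw U q D"
  using assms unfolding pw_def
  by (subst prod.insert) (auto intro!: prod.cong)

lemma pw_nonneg: "(\<And>j. j \<in> U \<Longrightarrow> 0 \<le> q j \<and> q j \<le> 1) \<Longrightarrow> 0 \<le> pw U q D"
  unfolding pw_def by (intro prod_nonneg) auto

lemma sum_pw_insert:
  assumes "finite U" "a \<notin> U"
  shows "(\<Sum>D\<in>Pow (insert a U). pw (insert a U) q D * \<psi> D)
       = (\<Sum>D\<in>Pow U. pw U q D * (q a * \<psi> (insert a D) + (1 - q a) * \<psi> D))"
proof -
  have disj: "Pow U \<inter> insert a ` Pow U = {}" using assms by auto
  have inj: "inj_on (insert a) (Pow U)"
    unfolding inj_on_def by (metis Diff_insert_absorb PowD assms(2) in_mono)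
  have "(\<Sum>D\<in>Pow (insert a U). pw (insert a U) q D * \<psi> D)
      = (\<Sum>D\<in>Pow U. pw (insert a U) q D * \<psi> D) + (\<Sum>D\<in>insert a ` Pow U. pw (insert a U) q D * \<psi> D)"
    unfolding Pow_insert using assms disj by (intro sum.union_disjoint) auto
  also have "(\<Sum>D\<in>insert a ` Pow U. pw (insert a U) q D * \<psi> D)
      = (\<Sum>D\<in>Pow U. pw (insert a U) q (insert a D) * \<psi> (insert a D))"
    by (subst sum.reindex[OF inj]) simp
  also have "\<dots> = (\<Sum>D\<in>Pow U. q a * pw U q D * \<psi> (insert a D))"
    using assms by (intro sum.cong) (auto simp: pw_insert2)
  also have "(\<Sum>D\<in>Pow U. pw (insert a U) q D * \<psi> D) = (\<Sum>D\<in>Pow U. (1 - q a) * pw U q D * \<psi> D)"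
    using assms by (intro sum.cong) (auto simp: pw_insert1)
  finally show ?thesis
    by (simp add: sum.distrib[symmetric] algebra_simps)
qed

lemma sum_pw_one: "finite U \<Longrightarrow> (\<Sum>D\<in>Pow U. pw U q D) = 1"
proof (induction U rule: finite_induct)
  case empty then show ?case by (simp add: pw_def)
next
  case (insert a U)
  from sum_pw_insert[OF insert(1,2), of q "\<lambda>_. 1"] insert(3) show ?case by simp
qed

lemma sum_pw_marginal:
  assumes "finite U" "V \<subseteq> U"
  shows "(\<Sum>D\<in>Pow U. pw U q D * \<psi> (D \<inter> V)) = (\<Sum>E\<in>Pow V. pw V q E * \<psi> E)"
  using assms
proof (induction U arbitrary: V \<psi> rule: finite_induct)
  case empty then show ?case by simp
next
  case (insert a U)
  show ?case
  proof (cases "a \<in> V")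
    case True
    define V' where "V' = V - {a}"
    have V: "V = insert a V'" "a \<notin> V'" "V' \<subseteq> U" "finite V'"
      using True insert V'_def by (auto intro: finite_subset)
    define \<psi>' where "\<psi>' E = q a * \<psi> (insert a E) + (1 - q a) * \<psi> E" for E
    have "(\<Sum>D\<in>Pow (insert a U). pw (insert a U) q D * \<psi> (D \<inter> V))
        = (\<Sum>D\<in>Pow U. pw U q D * \<psi>' (D \<inter> V'))"
      unfolding sum_pw_insert[OF insert(1,2)] \<psi>'_def
      using V insert(2) by (intro sum.cong refl) (auto simp: Int_insert_left Int_insert_right)
    also have "\<dots> = (\<Sum>E\<in>Pow V'. pw V' q E * \<psi>' E)"
      using insert.IH[OF V(3)] .
    also have "\<dots> = (\<Sum>E\<in>Pow V. pw V q E * \<psi> E)"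
      unfolding V(1) sum_pw_insert[OF V(4,2)] \<psi>'_def ..
    finally show ?thesis .
  next
    case False
    then have "V \<subseteq> U" using insert by auto
    have "(\<Sum>D\<in>Pow (insert a U). pw (insert a U) q D * \<psi> (D \<inter> V))
        = (\<Sum>D\<in>Pow U. pw U q D * \<psi> (D \<inter> V))"
      unfolding sum_pw_insert[OF insert(1,2)]
      using False by (intro sum.cong refl) (auto simp: algebra_simps)
    also have "\<dots> = (\<Sum>E\<in>Pow V. pw V q E * \<psi> E)" using insert.IH[OF \<open>V \<subseteq> U\<close>] .
    finally show ?thesis .
  qed
qed

lemma sum_pw_coupling:
  assumes "finite U"
    and "\<And>j. j \<in> U \<Longrightarrow> 0 \<le> q j \<and> q j \<le> p j \<and> p j \<le> 1"
    and "\<And>D D'. D \<subseteq> D' \<Longrightarrow> D' \<subseteq> U \<Longrightarrow> \<phi> D' \<le> \<phi> D"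
  shows "(\<Sum>D\<in>Pow U. pw U p D * \<phi> D) \<le> (\<Sum>D\<in>Pow U. pw U q D * \<phi> D)"
  using assms
proof (induction U arbitrary: \<phi> rule: finite_induct)
  case empty then show ?case by (simp add: pw_def)
next
  case (insert a U)
  define \<psi> where "\<psi> r E = r * \<phi> (insert a E) + (1 - r) * \<phi> E" for r E
  have qa: "0 \<le> q a" "q a \<le> p a" "p a \<le> 1" using insert(4) by auto
  have "(\<Sum>D\<in>Pow (insert a U). pw (insert a U) p D * \<phi> D) = (\<Sum>D\<in>Pow U. pw U p D * \<psi> (p a) D)"
    unfolding sum_pw_insert[OF insert(1,2)] \<psi>_def ..
  also have "\<dots> \<le> (\<Sum>D\<in>Pow U. pw U p D * \<psi> (q a) D)"
  proof (intro sum_mono mult_left_mono)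
    fix D assume "D \<in> Pow U"
    then have "\<phi> (insert a D) \<le> \<phi> D" using insert(5)[of D "insert a D"] by auto
    then have "(p a - q a) * (\<phi> (insert a D) - \<phi> D) \<le> 0"
      using qa by (intro mult_nonneg_nonpos) auto
    then show "\<psi> (p a) D \<le> \<psi> (q a) D" unfolding \<psi>_def by (simp add: algebra_simps)
    show "0 \<le> pw U p D" using insert(4) by (intro pw_nonneg) (auto, force)
  qed
  also have "\<dots> \<le> (\<Sum>D\<in>Pow U. pw U q D * \<psi> (q a) D)"
  proof (rule insert.IH)
    show "\<And>j. j \<in> U \<Longrightarrow> 0 \<le> q j \<and> q j \<le> p j \<and> p j \<le> 1" using insert(4) by auto
    fix D D' assume "D \<subseteq> D'" "D' \<subseteq> U"
    then have "\<phi> (insert a D') \<le> \<phi> (insert a D)" "\<phi> D' \<le> \<phi> D"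
 using insert(5)[of "insert a D" "insert a D'"] insert(5)[of D D'] by auto
    then show "\<psi> (q a) D' \<le> \<psi> (q a) D" unfolding \<psi>_def using qa
      by (intro add_mono mult_left_mono) auto
  qed
  also have "\<dots> = (\<Sum>D\<in>Pow (insert a U). pw (insert a U) q D * \<phi> D)"
    unfolding sum_pw_insert[OF insert(1,2)] \<psi>_def ..
  finally show ?case .
qed

lemma pw_const:
  assumes "finite U" "D \<subseteq> U"
  shows "pw U (\<lambda>_. r) D = r ^ card D * (1 - r) ^ card (U - D)"
proof -
  have "pw U (\<lambda>_. r) D = (\<Prod>j\<in>U \<inter> {j. j \<in> D}. r) * (\<Prod>j\<in>U \<inter> - {j. j \<in> D}. 1 - r)"
    unfolding pw_def by (rule prod.If_cases) (rule assms)
  moreover have "U \<inter> {j. j \<in> D} = D" "U \<inter> - {j. j \<in> D} = U - D" using assms by auto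
  ultimately show ?thesis by simp
qed

locale setting = prob_space M for M :: "'w measure" +
  fixes Mx :: "'a list \<Rightarrow> 'w \<Rightarrow> 'a list set" and B :: "'a list set"
    and A :: "'a list \<Rightarrow> 'a list set set" and B' :: "'a list set"
  assumes tree: "star_tree B"
    and indep: "indep_vars (\<lambda>_. count_space UNIV) Mx B"
    and sub: "\<forall>x\<in>B. \<forall>\<omega>\<in>space M. Mx x \<omega> \<subseteq> W B x"
    and B'_def: "B' = {i \<in> B. measure M {\<omega> \<in> space M. i \<in> rtree (\<lambda>x. Mx x \<omega>)} > 0}"
    and Aprops: "\<forall>x\<in>B'. A x \<subseteq> Pow (W B' x) \<and>
        (\<forall>X Y. X \<in> A x \<longrightarrow> X \<subseteq> Y \<longrightarrow> Y \<subseteq> W B' x \<longrightarrow> Y \<in> A x)"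
begin

definition "Ev z = {Mx z -` X \<inter> space M | X. X \<in> sets (count_space (UNIV :: 'a list set set))}"
definition "evs KK = sigma_sets (space M) (\<Union>z\<in>KK. Ev z)"
definition "V y = W B' y \<inter> W B y"
definition "dsc z = {w \<in> B. prefix z w}"
definition "anc0 z = {w \<in> B. strict_prefix w z}"

primrec G :: "nat \<Rightarrow> 'a list \<Rightarrow> 'w \<Rightarrow> bool" where
  "G 0 y \<omega> = True"
| "G (Suc n) y \<omega> = ({j \<in> Mx y \<omega> \<inter> V y. G n (y @ j) \<omega>} \<in> A y)"

lemma rv: "z \<in> B \<Longrightarrow> Mx z \<in> measurable M (count_space UNIV)"
  using indep unfolding indep_vars_def2 by auto

lemma Ev_sets: "z \<in> B \<Longrightarrow> Ev z \<subseteq> events"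
  using rv unfolding Ev_def by (auto dest: measurable_sets)

lemma Ev_Pow: "(\<Union>z\<in>KK. Ev z) \<subseteq> Pow (space M)"
  unfolding Ev_def by auto

lemma evs_SA: "sigma_algebra (space M) (evs KK)"
  unfolding evs_def by (rule sigma_algebra_sigma_sets[OF Ev_Pow])

lemma evs_sub: "KK \<subseteq> B \<Longrightarrow> evs KK \<subseteq> events"
  unfolding evs_def using Ev_sets by (intro sets.sigma_sets_subset) auto

lemma evs_mono: "KK \<subseteq> KK' \<Longrightarrow> evs KK \<subseteq> evs KK'"
  unfolding evs_def by (intro sigma_sets_mono') auto

lemma Ev_mem: "Mx z -` S \<inter> space M \<in> Ev z"
  unfolding Ev_def by (intro CollectI exI[of _ S]) simp

lemma evs_basic: "z \<in> KK \<Longrightarrow> {\<omega> \<in> space M. P (Mx z \<omega>)} \<in> evs KK"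
proof -
  assume "z \<in> KK"
  have "{\<omega> \<in> space M. P (Mx z \<omega>)} = Mx z -` {X. P X} \<inter> space M" by auto
  also have "\<dots> \<in> Ev z" by (rule Ev_mem)
  finally show ?thesis unfolding evs_def using \<open>z \<in> KK\<close> by (intro sigma_sets.Basic) auto
qed

lemma indep_blocks:
  assumes "\<And>j. j \<in> J \<Longrightarrow> I j \<subseteq> B" "disjoint_family_on I J"
  shows "indep_sets (\<lambda>j. evs (I j)) J"
  unfolding evs_def
proof (rule indep_sets_collect_sigma)
  have "indep_sets Ev B" using indep unfolding indep_vars_def2 Ev_def by auto
  then show "indep_sets Ev (\<Union>j\<in>J. I j)" by (rule indep_sets_mono_index[rotated]) (use assms in auto)
  show "disjoint_family_on I J" by fact
  fix i j show "Int_stable (Ev i)"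
    unfolding Int_stable_def Ev_def
  proof (intro ballI)
    fix a b assume "a \<in> {Mx i -` X \<inter> space M |X. X \<in> sets (count_space UNIV)}"
        "b \<in> {Mx i -` X \<inter> space M |X. X \<in> sets (count_space UNIV)}"
    then obtain X Y where "a = Mx i -` X \<inter> space M" "b = Mx i -` Y \<inter> space M" by auto
    then have "a \<inter> b = Mx i -` (X \<inter> Y) \<inter> space M" by auto
    then show "a \<inter> b \<in> {Mx i -` X \<inter> space M |X. X \<in> sets (count_space UNIV)}"
      by (intro CollectI exI[of _ "X \<inter> Y"]) simp
  qed
qed

lemma finite_V: "finite (V y)"
  unfolding V_def using finite_W[OF tree] by auto

lemma V_B': "j \<in> V y \<Longrightarrow> y @ j \<in> B'"
  unfolding V_def W_def level_def by auto

lemma B'_B: "B' \<subseteq> B" using B'_def by auto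

lemma V_B: "j \<in> V y \<Longrightarrow> y @ j \<in> B \<and> height B (y @ j) = Suc (height B y)"
  unfolding V_def using W_in by auto

lemma G_ev: "z \<in> B \<Longrightarrow> {\<omega> \<in> space M. G n z \<omega>} \<in> evs (dsc z)"
proof (induction n arbitrary: z)
  case 0
  interpret sa: sigma_algebra "space M" "evs (dsc z)" by (rule evs_SA)
  show ?case using sa.sets_Collect_const by simp
next
  case (Suc n)
  have eq: "{\<omega> \<in> space M. G (Suc n) z \<omega>} = {\<omega> \<in> space M. \<exists>E\<in>Pow (V z).
      (\<forall>j\<in>V z. (if j \<in> E then G n (z @ j) \<omega> else \<not> G n (z @ j) \<omega>)) \<and> Mx z \<omega> \<inter> E \<in> A z}"
  proof (intro Collect_cong conj_cong refl iffI)
    fix \<omega> assume g: "G (Suc n) z \<omega>"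
    have "Mx z \<omega> \<inter> {j \<in> V z. G n (z @ j) \<omega>} = {j \<in> Mx z \<omega> \<inter> V z. G n (z @ j) \<omega>}" by blast
    then have "Mx z \<omega> \<inter> {j \<in> V z. G n (z @ j) \<omega>} \<in> A z" using g by simp
    moreover have "\<forall>j\<in>V z. (if j \<in> {j \<in> V z. G n (z @ j) \<omega>} then G n (z @ j) \<omega> else \<not> G n (z @ j) \<omega>)"
      by simp
    ultimately show "\<exists>E\<in>Pow (V z). (\<forall>j\<in>V z. (if j \<in> E then G n (z @ j) \<omega> else \<not> G n (z @ j) \<omega>)) \<and> Mx z \<omega> \<inter> E \<in> A z"
      by (intro bexI[of _ "{j \<in> V z. G n (z @ j) \<omega>}"]) auto
  next
    fix \<omega> assume "\<exists>E\<in>Pow (V z). (\<forall>j\<in>V z. (if j \<in> E then G n (z @ j) \<omega> else \<not> G n (z @ j) \<omega>)) \<and> Mx z \<omega> \<inter> E \<in> A z"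
    then obtain E where E: "E \<subseteq> V z" "\<forall>j\<in>V z. (if j \<in> E then G n (z @ j) \<omega> else \<not> G n (z @ j) \<omega>)" "Mx z \<omega> \<inter> E \<in> A z"
      by blast
    have "{j \<in> Mx z \<omega> \<inter> V z. G n (z @ j) \<omega>} = Mx z \<omega> \<inter> E"
    proof (intro set_eqI iffI)
      fix j assume j: "j \<in> {j \<in> Mx z \<omega> \<inter> V z. G n (z @ j) \<omega>}"
      then have "if j \<in> E then G n (z @ j) \<omega> else \<not> G n (z @ j) \<omega>" using E(2) by blast
      with j show "j \<in> Mx z \<omega> \<inter> E" by (simp split: if_splits)
    next
      fix j assume j: "j \<in> Mx z \<omega> \<inter> E"
      then have "j \<in> V z" using E(1) by blast
      then have "if j \<in> E then G n (z @ j) \<omega> else \<not> G n (z @ j) \<omega>" using E(2) by blast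
      with j \<open>j \<in> V z\<close> show "j \<in> {j \<in> Mx z \<omega> \<inter> V z. G n (z @ j) \<omega>}" by simp
    qed
    then show "G (Suc n) z \<omega>" using E(3) by simp
  qed
  have ch: "j \<in> V z \<Longrightarrow> {\<omega> \<in> space M. G n (z @ j) \<omega>} \<in> evs (dsc z)" for j
  proof -
    assume "j \<in> V z"
    then have "z @ j \<in> B" using V_B by auto
    from Suc.IH[OF this] show ?thesis
      by (rule subsetD[OF evs_mono, rotated]) (auto simp: dsc_def prefix_def)
  qed
  have zd: "z \<in> dsc z" using Suc.prems by (auto simp: dsc_def)
  interpret sa: sigma_algebra "space M" "evs (dsc z)" by (rule evs_SA)
  have ifs: "{\<omega> \<in> space M. if j \<in> E then G n (z @ j) \<omega> else \<not> G n (z @ j) \<omega>} \<in> evs (dsc z)"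
    if "j \<in> V z" for j E
    using ch[OF that] by (cases "j \<in> E") (auto intro: sa.sets_Collect_neg)
  have all: "{\<omega> \<in> space M. \<forall>j\<in>V z. if j \<in> E then G n (z @ j) \<omega> else \<not> G n (z @ j) \<omega>} \<in> evs (dsc z)" for E
  proof (cases "V z = {}")
    case True then show ?thesis by simp
  next
    case False then show ?thesis
      by (intro sa.sets_Collect_finite_All' ifs finite_V)
  qed
  show ?case unfolding eq
    by (intro sa.sets_Collect_finite_Ex sa.sets_Collect_conj all evs_basic[OF zd]) (auto simp: finite_V)
qed

end

context setting begin

lemma gt0: "\<omega> \<in> space M \<Longrightarrow> gentree B [] (\<lambda>z. Mx z \<omega>)"
  by unfold_locales (use tree sub in \<open>auto simp: star_tree_def\<close>)

lemma S_level:
  assumes "\<omega> \<in> space M"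
  shows "x \<in> rtree (\<lambda>z. Mx z \<omega>) \<longleftrightarrow> x \<in> rlevel (\<lambda>z. Mx z \<omega>) (height B x)"
proof
  assume "x \<in> rtree (\<lambda>z. Mx z \<omega>)"
  then obtain n where n: "x \<in> rlevel (\<lambda>z. Mx z \<omega>) n" by (auto simp: rtree_def)
  from gentree.T1[OF gt0[OF assms] n] have "height B x = n" by (simp add: height_Nil)
  with n show "x \<in> rlevel (\<lambda>z. Mx z \<omega>) (height B x)" by simp
qed (auto simp: rtree_def)

lemma finite_anc0: "finite (anc0 x)"
  unfolding anc0_def using finite_strict_prefixes[of x] by (rule finite_subset[rotated]) auto

lemma S_ev: "{\<omega> \<in> space M. x \<in> rlevel (\<lambda>z. Mx z \<omega>) n} \<in> evs (anc0 x)"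
proof (induction n arbitrary: x)
  case 0
  interpret sa: sigma_algebra "space M" "evs (anc0 x)" by (rule evs_SA)
  show ?case using sa.sets_Collect_const by simp
next
  case (Suc n)
  interpret sa: sigma_algebra "space M" "evs (anc0 x)" by (rule evs_SA)
  have eq: "{\<omega> \<in> space M. x \<in> rlevel (\<lambda>z. Mx z \<omega>) (Suc n)} =
    {\<omega> \<in> space M. \<exists>p\<in>anc0 x. p \<in> rlevel (\<lambda>z. Mx z \<omega>) n \<and> drop (length p) x \<in> Mx p \<omega>}"
  proof (intro Collect_cong conj_cong refl iffI)
    fix \<omega> assume \<omega>: "\<omega> \<in> space M" and "x \<in> rlevel (\<lambda>z. Mx z \<omega>) (Suc n)"
    then obtain p j where p: "p \<in> rlevel (\<lambda>z. Mx z \<omega>) n" "j \<in> Mx p \<omega>" "x = p @ j" by auto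
    have "p \<in> B" using gentree.T1[OF gt0[OF \<omega>] p(1)] by simp
    then have "j \<in> W B p" using sub \<omega> p(2) by auto
    then have "j \<noteq> []" by (rule W_nonempty)
    then have "p \<in> anc0 x" using \<open>p \<in> B\<close> p(3) by (auto simp: anc0_def strict_prefix_def)
    then show "\<exists>p\<in>anc0 x. p \<in> rlevel (\<lambda>z. Mx z \<omega>) n \<and> drop (length p) x \<in> Mx p \<omega>"
      using p by auto
  next
    fix \<omega> assume "\<exists>p\<in>anc0 x. p \<in> rlevel (\<lambda>z. Mx z \<omega>) n \<and> drop (length p) x \<in> Mx p \<omega>"
    then obtain p where p: "p \<in> anc0 x" "p \<in> rlevel (\<lambda>z. Mx z \<omega>) n" "drop (length p) x \<in> Mx p \<omega>" by auto
    then obtain zs where "x = p @ zs" by (auto simp: anc0_def strict_prefix_def prefix_def)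
    then show "x \<in> rlevel (\<lambda>z. Mx z \<omega>) (Suc n)" using p by auto
  qed
  have sub1: "p \<in> anc0 x \<Longrightarrow> evs (anc0 p) \<subseteq> evs (anc0 x)" for p
    by (intro evs_mono) (auto simp: anc0_def intro: prefix_order.less_trans)
  show ?case unfolding eq
    by (intro sa.sets_Collect_finite_Ex sa.sets_Collect_conj finite_anc0 evs_basic
        subsetD[OF sub1 Suc.IH])
qed

lemma G_anti: "y \<in> B' \<Longrightarrow> G (Suc n) y \<omega> \<Longrightarrow> G n y \<omega>"
proof (induction n arbitrary: y)
  case 0 then show ?case by simp
next
  case (Suc n)
  have "{j \<in> Mx y \<omega> \<inter> V y. G (Suc n) (y @ j) \<omega>} \<in> A y" using Suc.prems by simp
  moreover have "{j \<in> Mx y \<omega> \<inter> V y. G (Suc n) (y @ j) \<omega>} \<subseteq> {j \<in> Mx y \<omega> \<inter> V y. G n (y @ j) \<omega>}"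
    using Suc.IH V_B' by auto
  moreover have "{j \<in> Mx y \<omega> \<inter> V y. G n (y @ j) \<omega>} \<subseteq> W B' y" by (auto simp: V_def)
  ultimately have "{j \<in> Mx y \<omega> \<inter> V y. G n (y @ j) \<omega>} \<in> A y"
    using Aprops Suc.prems(1) by blast
  then show ?case by simp
qed

lemma G_mono: "y \<in> B' \<Longrightarrow> m \<le> n \<Longrightarrow> G n y \<omega> \<Longrightarrow> G m y \<omega>"
proof (induction n)
  case 0 then show ?case by simp
next
  case (Suc n)
  show ?case
  proof (cases "m = Suc n")
    case True then show ?thesis using Suc by simp
  next
    case False
    then have "m \<le> n" using Suc.prems by simp
    moreover have "G n y \<omega>" using G_anti[OF Suc.prems(1,3)] .
    ultimately show ?thesis using Suc.IH Suc.prems(1) by blast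
  qed
qed

lemma Gev: "z \<in> B \<Longrightarrow> {\<omega> \<in> space M. G n z \<omega>} \<in> events"
  using G_ev evs_sub[of "dsc z"] by (auto simp: dsc_def)

lemma Xev: "y \<in> B \<Longrightarrow> {\<omega> \<in> space M. P (Mx y \<omega>)} \<in> events"
  using evs_basic[of y "{y}"] evs_sub[of "{y}"] by auto

end

context setting begin

lemma core:
  assumes y: "y \<in> B'" and s0: "0 \<le> s0" "s0 \<le> 1"
    and IH: "\<forall>j\<in>V y. prob {\<omega> \<in> space M. \<not> G n (y @ j) \<omega>} \<le> s0"
  shows "prob {\<omega> \<in> space M. \<not> G (Suc n) y \<omega>} \<le> thin_prob M Mx (W B y) (A y) y s0"
proof -
  define U where "U = V y"
  have yB: "y \<in> B" using y B'_B by auto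
  have finU: "finite U" unfolding U_def by (rule finite_V)
  have UW: "U \<subseteq> W B y" unfolding U_def V_def by auto
  have finW: "finite (W B y)" by (rule finite_W[OF tree])
  define \<phi> where "\<phi> E = prob {\<omega> \<in> space M. Mx y \<omega> \<inter> E \<notin> A y}" for E
  define p where "p j = prob {\<omega> \<in> space M. G n (y @ j) \<omega>}" for j
  define F where "F E = {\<omega> \<in> space M. {j \<in> U. G n (y @ j) \<omega>} = E \<and> Mx y \<omega> \<inter> E \<notin> A y}" for E
  have jB: "j \<in> U \<Longrightarrow> y @ j \<in> B" for j using V_B unfolding U_def by auto
  have eq1: "{\<omega> \<in> space M. \<not> G (Suc n) y \<omega>} = (\<Union>E\<in>Pow U. F E)"
  proof -
    have "Mx y \<omega> \<inter> {j \<in> U. G n (y @ j) \<omega>} = {j \<in> Mx y \<omega> \<inter> V y. G n (y @ j) \<omega>}" for \<omega>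
      unfolding U_def by blast
    then show ?thesis unfolding F_def by auto
  qed
  define J where "J = insert None (Some ` U)"
  define I where "I k = (case k of None \<Rightarrow> {y} | Some j \<Rightarrow> dsc (y @ j))" for k
  have indepJ: "indep_sets (\<lambda>k. evs (I k)) J"
  proof (rule indep_blocks)
    fix k assume "k \<in> J" then show "I k \<subseteq> B"
      using yB by (auto simp: I_def J_def dsc_def split: option.splits)
  next
    show "disjoint_family_on I J"
      unfolding disjoint_family_on_def
    proof (intro ballI impI)
      fix k k' assume k: "k \<in> J" "k' \<in> J" "k \<noteq> k'"
      have nd: "j \<in> U \<Longrightarrow> y \<notin> dsc (y @ j)" for j
        using W_nonempty UW by (auto simp: dsc_def prefix_def)
      have dd: "j \<in> U \<Longrightarrow> j' \<in> U \<Longrightarrow> j \<noteq> j' \<Longrightarrow> dsc (y @ j) \<inter> dsc (y @ j') = {}" for j j'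
      proof (rule ccontr)
        assume jj: "j \<in> U" "j' \<in> U" "j \<noteq> j'" "dsc (y @ j) \<inter> dsc (y @ j') \<noteq> {}"
        then obtain w where "prefix (y @ j) w" "prefix (y @ j') w" by (auto simp: dsc_def)
        moreover have "y @ j \<in> B" "y @ j' \<in> B" "height B (y @ j) = height B (y @ j')"
          using V_B jj unfolding U_def by auto
        ultimately have "y @ j = y @ j'" using height_unique by blast
        then show False using jj by simp
      qed
      show "I k \<inter> I k' = {}"
        using k nd dd by (auto simp: I_def J_def split: option.splits)
    qed
  qed
  define AA where "AA E k = (case k of None \<Rightarrow> {\<omega> \<in> space M. Mx y \<omega> \<inter> E \<notin> A y}
      | Some j \<Rightarrow> {\<omega> \<in> space M. G n (y @ j) \<omega> \<longleftrightarrow> j \<in> E})" for E k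
  have AA_evs: "AA E k \<in> evs (I k)" if "k \<in> J" for E k
  proof (cases k)
    case None then show ?thesis unfolding AA_def I_def
      using evs_basic[of y "{y}" "\<lambda>X. X \<inter> E \<notin> A y"] by simp
  next
    case (Some j)
    then have j: "j \<in> U" using that by (auto simp: J_def)
    interpret sa: sigma_algebra "space M" "evs (dsc (y @ j))" by (rule evs_SA)
    have "{\<omega> \<in> space M. G n (y @ j) \<omega>} \<in> evs (dsc (y @ j))" using G_ev jB[OF j] by blast
    then show ?thesis unfolding AA_def I_def Some
      by (cases "j \<in> E") (auto intro: sa.sets_Collect_neg)
  qed
  have AA_ev: "AA E k \<in> events" if "k \<in> J" for E k
  proof -
    have "I k \<subseteq> B" using that yB by (auto simp: I_def J_def dsc_def split: option.splits)
    then show ?thesis using evs_sub AA_evs[OF that] by blast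
  qed
  have FE: "F E = (\<Inter>k\<in>J. AA E k)" if "E \<subseteq> U" for E
  proof (intro set_eqI iffI)
    fix \<omega> assume "\<omega> \<in> F E" then show "\<omega> \<in> (\<Inter>k\<in>J. AA E k)"
      using that unfolding F_def J_def AA_def by auto
  next
    fix \<omega> assume a: "\<omega> \<in> (\<Inter>k\<in>J. AA E k)"
    then have "\<omega> \<in> AA E None" unfolding J_def by blast
    then have 1: "\<omega> \<in> space M" "Mx y \<omega> \<inter> E \<notin> A y" unfolding AA_def by auto
    have 2: "G n (y @ j) \<omega> \<longleftrightarrow> j \<in> E" if "j \<in> U" for j
      using a that unfolding J_def AA_def by auto
    have "{j \<in> U. G n (y @ j) \<omega>} = E" using 2 \<open>E \<subseteq> U\<close> by auto
    then show "\<omega> \<in> F E" using 1 unfolding F_def by auto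
  qed
  have pF: "prob (F E) = \<phi> E * pw U p E" if "E \<subseteq> U" for E
  proof -
    have "prob (F E) = (\<Prod>k\<in>J. prob (AA E k))"
      unfolding FE[OF that] using finU AA_evs
      by (intro indep_setsD[OF indepJ]) (auto simp: J_def)
    also have "\<dots> = prob (AA E None) * (\<Prod>j\<in>U. prob (AA E (Some j)))"
      unfolding J_def using finU by (simp add: prod.reindex)
    also have "prob (AA E None) = \<phi> E" unfolding AA_def \<phi>_def by simp
    also have "(\<Prod>j\<in>U. prob (AA E (Some j))) = pw U p E"
      unfolding pw_def
    proof (intro prod.cong refl)
      fix j assume j: "j \<in> U"
      have ev: "{\<omega> \<in> space M. G n (y @ j) \<omega>} \<in> events" using Gev jB[OF j] .
      show "prob (AA E (Some j)) = (if j \<in> E then p j else 1 - p j)"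
      proof (cases "j \<in> E")
        case True then show ?thesis unfolding AA_def p_def by simp
      next
        case False
        have "AA E (Some j) = space M - {\<omega> \<in> space M. G n (y @ j) \<omega>}"
          unfolding AA_def using False by auto
        then show ?thesis using False prob_compl[OF ev] unfolding p_def by simp
      qed
    qed
    finally show ?thesis .
  qed
  have Fev: "F E \<in> events" if "E \<subseteq> U" for E
    unfolding FE[OF that] using finU AA_ev by (intro sets.finite_INT) (auto simp: J_def)
  have "prob {\<omega> \<in> space M. \<not> G (Suc n) y \<omega>} = (\<Sum>E\<in>Pow U. prob (F E))"
    unfolding eq1
  proof (rule finite_measure_finite_Union)
    show "finite (Pow U)" using finU by simp
    show "F ` Pow U \<subseteq> events" using Fev by auto
    show "disjoint_family_on F (Pow U)" unfolding disjoint_family_on_def F_def by auto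
  qed
  also have "\<dots> = (\<Sum>E\<in>Pow U. pw U p E * \<phi> E)"
    using pF by (intro sum.cong refl) (auto simp: mult.commute)
  also have "\<dots> \<le> (\<Sum>E\<in>Pow U. pw U (\<lambda>_. 1 - s0) E * \<phi> E)"
  proof (rule sum_pw_coupling[OF finU])
    fix j assume j: "j \<in> U"
    have ev: "{\<omega> \<in> space M. G n (y @ j) \<omega>} \<in> events" using Gev jB[OF j] .
    have "space M - {\<omega> \<in> space M. G n (y @ j) \<omega>} = {\<omega> \<in> space M. \<not> G n (y @ j) \<omega>}" by auto
    then have "p j = 1 - prob {\<omega> \<in> space M. \<not> G n (y @ j) \<omega>}"
      using prob_compl[OF ev] unfolding p_def by simp
    moreover have "prob {\<omega> \<in> space M. \<not> G n (y @ j) \<omega>} \<le> s0" using IH j unfolding U_def by auto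
    moreover have "p j \<le> 1" unfolding p_def by (rule prob_le_1)
    ultimately show "0 \<le> 1 - s0 \<and> 1 - s0 \<le> p j \<and> p j \<le> 1" using s0 by auto
  next
    fix D D' assume DD: "D \<subseteq> D'" "D' \<subseteq> U"
    have "{\<omega> \<in> space M. Mx y \<omega> \<inter> D' \<notin> A y} \<subseteq> {\<omega> \<in> space M. Mx y \<omega> \<inter> D \<notin> A y}"
    proof safe
      fix \<omega> assume "\<omega> \<in> space M" "Mx y \<omega> \<inter> D' \<notin> A y" "Mx y \<omega> \<inter> D \<in> A y"
      moreover have "Mx y \<omega> \<inter> D \<subseteq> Mx y \<omega> \<inter> D'" "Mx y \<omega> \<inter> D' \<subseteq> W B' y"
        using DD unfolding U_def V_def by auto
      ultimately show False using Aprops y by blast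
    qed
    then show "\<phi> D' \<le> \<phi> D" unfolding \<phi>_def
      by (intro finite_measure_mono Xev yB)
  qed
  also have "\<dots> = (\<Sum>D\<in>Pow (W B y). pw (W B y) (\<lambda>_. 1 - s0) D * \<phi> (D \<inter> U))"
    by (rule sum_pw_marginal[symmetric, OF finW UW])
  also have "\<dots> \<le> (\<Sum>D\<in>Pow (W B y). pw (W B y) (\<lambda>_. 1 - s0) D * prob {\<omega> \<in> space M. Mx y \<omega> \<inter> D \<notin> A y})"
  proof (intro sum_mono mult_left_mono)
    fix D
    have "{\<omega> \<in> space M. Mx y \<omega> \<inter> (D \<inter> U) \<notin> A y} \<subseteq> {\<omega> \<in> space M. Mx y \<omega> \<inter> D \<notin> A y}"
    proof safe
      fix \<omega> assume \<omega>: "\<omega> \<in> space M" "Mx y \<omega> \<inter> (D \<inter> U) \<notin> A y" "Mx y \<omega> \<inter> D \<in> A y"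
      then have "Mx y \<omega> \<inter> D \<subseteq> W B' y" using Aprops y by blast
      moreover have "Mx y \<omega> \<subseteq> W B y" using sub yB \<omega>(1) by auto
      ultimately have "Mx y \<omega> \<inter> (D \<inter> U) = Mx y \<omega> \<inter> D" unfolding U_def V_def by auto
      then show False using \<omega> by simp
    qed
    then show "\<phi> (D \<inter> U) \<le> prob {\<omega> \<in> space M. Mx y \<omega> \<inter> D \<notin> A y}"
      unfolding \<phi>_def by (intro finite_measure_mono Xev yB)
    show "0 \<le> pw (W B y) (\<lambda>_. 1 - s0) D" using s0 by (intro pw_nonneg) auto
  qed
  also have "\<dots> = thin_prob M Mx (W B y) (A y) y s0"
    unfolding thin_prob_def using finW by (intro sum.cong refl) (auto simp: pw_const)
  finally show ?thesis .
qed

lemma G_bound: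
  assumes s0: "0 \<le> s0" "s0 \<le> 1" and th: "\<forall>y\<in>B'. thin_prob M Mx (W B y) (A y) y s0 \<le> s0"
  shows "y \<in> B' \<Longrightarrow> prob {\<omega> \<in> space M. \<not> G n y \<omega>} \<le> s0"
proof (induction n arbitrary: y)
  case 0 then show ?case using s0 by simp
next
  case (Suc n)
  have "\<forall>j\<in>V y. prob {\<omega> \<in> space M. \<not> G n (y @ j) \<omega>} \<le> s0" using Suc.IH V_B' by auto
  from core[OF Suc.prems s0 this] th Suc.prems show ?case by fastforce
qed

end

context setting begin

lemma stab:
  assumes y: "y \<in> B'" "\<forall>n. G n y \<omega>"
  shows "{j \<in> Mx y \<omega> \<inter> V y. \<forall>n. G n (y @ j) \<omega>} \<in> A y"
proof -
  define C where "C = {j \<in> Mx y \<omega> \<inter> V y. \<forall>n. G n (y @ j) \<omega>}"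
  define Fs where "Fs = (Mx y \<omega> \<inter> V y) - C"
  have finFs: "finite Fs" unfolding Fs_def using finite_V by auto
  have "\<forall>j\<in>Fs. \<exists>N. \<not> G N (y @ j) \<omega>" unfolding Fs_def C_def by auto
  then obtain f where f: "\<forall>j\<in>Fs. \<not> G (f j) (y @ j) \<omega>" by metis
  define N where "N = (\<Sum>j\<in>Fs. f j)"
  have notG: "\<not> G N (y @ j) \<omega>" if j: "j \<in> Fs" for j
  proof
    assume "G N (y @ j) \<omega>"
    moreover have "f j \<le> N" unfolding N_def using j finFs by (intro member_le_sum) auto
    moreover have "y @ j \<in> B'" using j V_B' unfolding Fs_def by auto
    ultimately have "G (f j) (y @ j) \<omega>" using G_mono by blast
    then show False using f j by auto
  qed
  have CN: "{j \<in> Mx y \<omega> \<inter> V y. G N (y @ j) \<omega>} \<in> A y" using y(2)[rule_format, of "Suc N"] by simp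
  have "{j \<in> Mx y \<omega> \<inter> V y. G N (y @ j) \<omega>} \<subseteq> C"
    using notG unfolding Fs_def by blast
  moreover have "C \<subseteq> W B' y" unfolding C_def V_def by auto
  ultimately have "C \<in> A y" using CN Aprops y(1) by blast
  then show ?thesis unfolding C_def .
qed

lemma pointwise:
  assumes \<omega>: "\<omega> \<in> space M" and x: "x \<in> B'" and xS: "x \<in> rtree (\<lambda>z. Mx z \<omega>)"
    and Gx: "\<forall>n. G n x \<omega>"
  shows "\<exists>Q. star_subtree Q (subtree_at (rtree (\<lambda>z. Mx z \<omega>)) x) \<and> A_star_tree (\<lambda>i. A (x @ i)) Q"
proof -
  define m where "m i = {j \<in> Mx (x @ i) \<omega> \<inter> V (x @ i). \<forall>n. G n ((x @ i) @ j) \<omega>}" for i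
  define M0 where "M0 = (\<lambda>z. Mx z \<omega>)"
  have xB: "x \<in> B" using x B'_B by auto
  interpret gm: gentree B x m
    by unfold_locales (auto simp: m_def V_def xB)
  interpret g0: gentree B "[]" M0 unfolding M0_def by (rule gt0[OF \<omega>])
  have inv: "i \<in> rlevel m n \<Longrightarrow> x @ i \<in> B' \<and> (\<forall>n. G n (x @ i) \<omega>)" for i n
  proof (induction n arbitrary: i)
    case 0 then show ?case using x Gx by simp
  next
    case (Suc n)
    then obtain p j where p: "p \<in> rlevel m n" "j \<in> m p" "i = p @ j" by auto
    then show ?case using V_B'[of j "x @ p"] by (auto simp: m_def)
  qed
  have hx: "x \<in> rlevel M0 (height B x)" using S_level[OF \<omega>] xS unfolding M0_def by simp
  have inS: "i \<in> rlevel m n \<Longrightarrow> x @ i \<in> rlevel M0 (height B x + n)" for i n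
  proof (induction n arbitrary: i)
    case 0 then show ?case using hx by simp
  next
    case (Suc n)
    then obtain p j where p: "p \<in> rlevel m n" "j \<in> m p" "i = p @ j" by auto
    have "j \<in> M0 (x @ p)" using p(2) unfolding m_def M0_def by auto
    then have "(x @ p) @ j \<in> (\<Union>i\<in>rlevel M0 (height B x + n). (\<lambda>jj. i @ jj) ` M0 i)"
      by (intro UN_I[OF Suc.IH[OF p(1)]] imageI)
    then have "(x @ p) @ j \<in> rlevel M0 (Suc (height B x + n))"
      by (simp only: rlevel.simps)
    then show ?case using p(3) by simp
  qed
  have inrt: "i \<in> rtree m \<longleftrightarrow> (\<exists>n. i \<in> rlevel m n)" for i by (simp add: rtree_def)
  show ?thesis
  proof (intro exI[of _ "rtree m"] conjI)
    have st: "star_tree (rtree m)" by (rule gm.T6[OF tree])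
    then show "star_subtree (rtree m) (subtree_at (rtree (\<lambda>z. Mx z \<omega>)) x)"
      unfolding star_subtree_def
    proof (intro conjI ballI impI subsetI)
      fix i assume "i \<in> rtree m"
      then obtain n where "i \<in> rlevel m n" by (auto simp: inrt)
      from inS[OF this] show "i \<in> subtree_at (rtree (\<lambda>z. Mx z \<omega>)) x"
        unfolding subtree_at_def rtree_def M0_def by auto
    next
      fix i j assume i: "i \<in> rtree m" and j: "j \<in> subtree_at (rtree (\<lambda>z. Mx z \<omega>)) x"
        and ji: "strict_prefix j i"
      from i obtain n where n: "i \<in> rlevel m n" by (auto simp: inrt)
      from j obtain k' where k': "x @ j \<in> rlevel M0 k'"
        unfolding subtree_at_def rtree_def M0_def by auto
      from g0.T1[OF k'] have xjB: "x @ j \<in> B" and hj: "height B (x @ j) = k'"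
        by (auto simp: height_Nil)
      from gm.T1[OF n] have xiB: "x @ i \<in> B" and hi: "height B (x @ i) = height B x + n" by auto
      have h1: "height B x \<le> height B (x @ j)"
      proof (cases "j = []")
        case True then show ?thesis by simp
      next
        case False
        then have "strict_prefix x (x @ j)" by (auto simp: strict_prefix_def)
        from height_mono[OF xB this] show ?thesis by simp
      qed
      have "strict_prefix (x @ j) (x @ i)" using ji by (auto simp: strict_prefix_def)
      from height_mono[OF xjB this] have h2: "height B (x @ j) < height B (x @ i)" .
      define k where "k = height B (x @ j) - height B x"
      have "k \<le> n" using h1 h2 hi unfolding k_def by simp
      from gm.T2[OF n this] obtain c where c: "c \<in> rlevel m k" "prefix c i" by auto
      from gm.T1[OF c(1)] have "x @ c \<in> B" "height B (x @ c) = height B (x @ j)"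
        using h1 unfolding k_def by auto
      moreover have "prefix (x @ c) (x @ i)" "prefix (x @ j) (x @ i)"
        using c(2) ji by (auto simp: strict_prefix_def)
      ultimately have "x @ c = x @ j" using height_unique xjB by blast
      then show "j \<in> rtree m" using c(1) by (auto simp: inrt)
    qed
    show "A_star_tree (\<lambda>i. A (x @ i)) (rtree m)"
      unfolding A_star_tree_def
    proof (intro conjI ballI st)
      fix i assume "i \<in> rtree m"
      then obtain n where n: "i \<in> rlevel m n" by (auto simp: inrt)
      have "W (rtree m) i = m i" by (rule gm.T7[OF n])
      also have "m i \<in> A (x @ i)" unfolding m_def using stab inv[OF n] by blast
      finally show "W (rtree m) i \<in> A (x @ i)" .
    qed
  qed
qed

end

theorem theorem5p17:
  fixes M :: "'w measure"
    and Mx :: "'a::finite list \<Rightarrow> 'w \<Rightarrow> 'a list set"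
    and B :: "'a list set"
    and A :: "'a list \<Rightarrow> 'a list set set"
    and s0 :: real
  assumes "prob_space M"
    and "star_tree B"
    and indep: "prob_space.indep_vars M (\<lambda>_. count_space UNIV) Mx B"
    and sub: "\<forall>x\<in>B. \<forall>\<omega>\<in>space M. Mx x \<omega> \<subseteq> W B x"
  defines "S \<equiv> \<lambda>\<omega>. rtree (\<lambda>x. Mx x \<omega>)"
  defines "B' \<equiv> {i \<in> B. measure M {\<omega> \<in> space M. i \<in> S \<omega>} > 0}"
  assumes bounded: "\<exists>C::real. C > 0 \<and>
        (\<forall>x\<in>B'. measure M {\<omega> \<in> space M. real (card (Mx x \<omega>)) < C} = 1)"
    and Aprops: "\<forall>x\<in>B'. A x \<noteq> {} \<and> A x \<subseteq> Pow (W B' x) \<and>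
        (\<forall>X Y. X \<in> A x \<longrightarrow> X \<subseteq> Y \<longrightarrow> Y \<subseteq> W B' x \<longrightarrow> Y \<in> A x)"
  defines "g \<equiv> \<lambda>s. (SUP x\<in>B'. thin_prob M Mx (W B x) (A x) x s)"
  assumes s0: "s0 \<in> {0..1}" "g s0 = s0" "\<forall>t\<in>{0..1}. g t = t \<longrightarrow> s0 \<le> t"
  shows "(SUP x\<in>B'.
            measure M {\<omega> \<in> space M. x \<in> S \<omega> \<and>
               \<not> (\<exists>Q. star_subtree Q (subtree_at (S \<omega>) x) \<and> A_star_tree (\<lambda>i. A (x @ i)) Q)}
            / measure M {\<omega> \<in> space M. x \<in> S \<omega>}) \<le> s0"
proof -
  interpret prob_space M by fact
  interpret st: setting M Mx B A B'
  proof unfold_locales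
    show "star_tree B" by fact
    show "indep_vars (\<lambda>_. count_space UNIV) Mx B" by fact
    show "\<forall>x\<in>B. \<forall>\<omega>\<in>space M. Mx x \<omega> \<subseteq> W B x" by fact
    show "B' = {i \<in> B. 0 < prob {\<omega> \<in> space M. i \<in> rtree (\<lambda>x. Mx x \<omega>)}}"
      unfolding B'_def S_def ..
    show "\<forall>x\<in>B'. A x \<subseteq> Pow (W B' x) \<and> (\<forall>X Y. X \<in> A x \<longrightarrow> X \<subseteq> Y \<longrightarrow> Y \<subseteq> W B' x \<longrightarrow> Y \<in> A x)"
      using Aprops by blast
  qed
  have s01: "0 \<le> s0" "s0 \<le> 1" using s0(1) by auto
  have thin_le1: "thin_prob M Mx (W B y) (A y) y s0 \<le> 1" for y
  proof -
    have fin: "finite (W B y)" by (rule finite_W) fact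
    have "thin_prob M Mx (W B y) (A y) y s0 =
        (\<Sum>D\<in>Pow (W B y). pw (W B y) (\<lambda>_. 1 - s0) D * prob {\<omega> \<in> space M. Mx y \<omega> \<inter> D \<notin> A y})"
      unfolding thin_prob_def using fin by (intro sum.cong refl) (auto simp: pw_const)
    also have "\<dots> \<le> (\<Sum>D\<in>Pow (W B y). pw (W B y) (\<lambda>_. 1 - s0) D * 1)"
      using s01 by (intro sum_mono mult_left_mono prob_le_1 pw_nonneg) auto
    also have "\<dots> = 1" using sum_pw_one[OF fin] by simp
    finally show ?thesis .
  qed
  have th: "\<forall>y\<in>B'. thin_prob M Mx (W B y) (A y) y s0 \<le> s0"
  proof
    fix y assume "y \<in> B'"
    have "thin_prob M Mx (W B y) (A y) y s0 \<le> g s0"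
      unfolding g_def using \<open>y \<in> B'\<close> thin_le1 by (intro cSUP_upper bdd_aboveI2) auto
    then show "thin_prob M Mx (W B y) (A y) y s0 \<le> s0" using s0(2) by simp
  qed
  have nil: "[] \<in> B'"
  proof -
    have "[] \<in> B" using \<open>star_tree B\<close> by (simp add: star_tree_def)
    moreover have "{\<omega> \<in> space M. [] \<in> S \<omega>} = space M"
      unfolding S_def rtree_def by (auto intro: exI[of _ 0])
    ultimately show ?thesis unfolding B'_def by (simp add: prob_space)
  qed
  show ?thesis
  proof (rule cSUP_least)
    show "B' \<noteq> {}" using nil by auto
  next
    fix x assume x: "x \<in> B'"
    have xB: "x \<in> B" using x st.B'_B by auto
    define Sx where "Sx = {\<omega> \<in> space M. x \<in> S \<omega>}"
    define Gc where "Gc = {\<omega> \<in> space M. \<exists>n. \<not> st.G n x \<omega>}"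
    have pos: "prob Sx > 0" using x unfolding B'_def Sx_def by auto
    have tsub: "{\<omega> \<in> space M. x \<in> S \<omega> \<and>
               \<not> (\<exists>Q. star_subtree Q (subtree_at (S \<omega>) x) \<and> A_star_tree (\<lambda>i. A (x @ i)) Q)}
             \<subseteq> Sx \<inter> Gc"
      unfolding Sx_def Gc_def S_def using st.pointwise[OF _ x] by blast
    have Sx_ev: "Sx \<in> st.evs (st.anc0 x)"
    proof -
      have "Sx = {\<omega> \<in> space M. x \<in> rlevel (\<lambda>z. Mx z \<omega>) (height B x)}"
        unfolding Sx_def S_def using st.S_level by blast
      then show ?thesis using st.S_ev by simp
    qed
    have Gc_ev: "Gc \<in> st.evs (st.dsc x)"
    proof -
      interpret sa: sigma_algebra "space M" "st.evs (st.dsc x)" by (rule st.evs_SA)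
      show ?thesis unfolding Gc_def
        by (intro sa.sets_Collect_countable_Ex sa.sets_Collect_neg st.G_ev xB)
    qed
    define I where "I b = (if b then st.anc0 x else st.dsc x)" for b
    have ind: "indep_sets (\<lambda>b. st.evs (I b)) UNIV"
    proof (rule st.indep_blocks)
      show "I b \<subseteq> B" for b unfolding I_def st.anc0_def st.dsc_def by auto
      show "disjoint_family_on I UNIV"
        unfolding disjoint_family_on_def I_def st.anc0_def st.dsc_def
        by (auto simp: strict_prefix_def dest: prefix_order.antisym)
    qed
    have "prob (Sx \<inter> Gc) = prob Sx * prob Gc"
    proof -
      have "prob (\<Inter>b\<in>UNIV. (if b then Sx else Gc)) = (\<Prod>b\<in>UNIV. prob (if b then Sx else Gc))"
        using Sx_ev Gc_ev by (intro indep_setsD[OF ind]) (auto simp: I_def)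
      moreover have "(\<Inter>b\<in>UNIV. (if b then Sx else Gc)) = Sx \<inter> Gc" by (auto simp: UNIV_bool)
      ultimately show ?thesis by (simp add: UNIV_bool)
    qed
    have evsx: "Sx \<in> events" "Gc \<in> events"
      using Sx_ev Gc_ev st.evs_sub[of "st.anc0 x"] st.evs_sub[of "st.dsc x"]
      by (auto simp: st.anc0_def st.dsc_def)
    have "prob Gc \<le> s0"
    proof -
      define Fn where "Fn n = {\<omega> \<in> space M. \<not> st.G n x \<omega>}" for n
      have "Gc = (\<Union>n. Fn n)" unfolding Gc_def Fn_def by auto
      moreover have "(\<lambda>n. prob (Fn n)) \<longlonglongrightarrow> prob (\<Union>n. Fn n)"
      proof (rule finite_Lim_measure_incseq)
        show "range Fn \<subseteq> events" unfolding Fn_def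
          using st.Gev[OF xB] by (auto intro: sets.sets_Collect_neg)
        show "incseq Fn"
        proof (rule incseq_SucI)
          fix n show "Fn n \<subseteq> Fn (Suc n)"
            unfolding Fn_def using st.G_anti[OF x, of n] by blast
        qed
      qed
      moreover have "prob (Fn n) \<le> s0" for n
        unfolding Fn_def by (rule st.G_bound[OF s01 th x])
      ultimately show ?thesis by (metis LIMSEQ_le_const2)
    qed
    have "measure M {\<omega> \<in> space M. x \<in> S \<omega> \<and>
               \<not> (\<exists>Q. star_subtree Q (subtree_at (S \<omega>) x) \<and> A_star_tree (\<lambda>i. A (x @ i)) Q)}
          \<le> prob (Sx \<inter> Gc)"
      using tsub evsx by (intro finite_measure_mono) auto
    also have "\<dots> \<le> prob Sx * s0"
      using \<open>prob (Sx \<inter> Gc) = _\<close> \<open>prob Gc \<le> s0\<close> by (simp add: mult_left_mono)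
    finally show "measure M {\<omega> \<in> space M. x \<in> S \<omega> \<and>
               \<not> (\<exists>Q. star_subtree Q (subtree_at (S \<omega>) x) \<and> A_star_tree (\<lambda>i. A (x @ i)) Q)}
            / measure M {\<omega> \<in> space M. x \<in> S \<omega>} \<le> s0"
      using pos unfolding Sx_def by (simp add: divide_le_eq mult.commute)
  qed
qed


end
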